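(* Let $\{Y_k\}$ be a fourth-order stationary sequence with $EY_k=0$, autocovariances $\gamma_j=\mathrm{Cov}(Y_0,Y_j)$ and fourth-order cumulants $\kappa(h,r,s)$, satisfying: (a) $n^{-1/2}\sum_{1\le j\le nt}Y_j\xrightarrow{d}\sigma W(t)$ in $D[0,1]$ for some $\sigma>0$; (b) $\sum_j|\gamma_j|<\infty$; (c) $\sup_h\sum_{r,s}|\kappa(h,r,s)|<\infty$. For each $n$ let $X_i=\mu+Y_i$ for $1\le i\le k^*$ and $X_i=\mu+\Delta+Y_i$ for $k^*<i\le n$, where $\mu$ is a constant and $k^*=k^*(n)$, $\Delta=\Delta(n)$ satisfy $k^*=[n\theta]$ for some $0<\theta<1$, $n\Delta^2\to\infty$, $\Delta^2|\hat k-k^*|=O_P(1)$ and $q(n)\Delta^2=O(1)$. Suppose $q(n)\to\infty$ and $q(n)/n\to0$. Then $T_n\xrightarrow{P}\infty$.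
   Context: A sequence is fourth-order stationary if it has finite fourth moments and its joint moments of order at most four are shift invariant; $\kappa(h,r,s)=E[Y_kY_{k+h}Y_{k+r}Y_{k+s}]-(\gamma_h\gamma_{r-s}+\gamma_r\gamma_{h-s}+\gamma_s\gamma_{h-r})$. $q(n)$ is a sequence of positive integers, $\omega_j(q)=1-j/(q+1)$, $\bar X_n=\frac1n\sum_{i\le n}X_i$, $\hat\gamma_j=\frac1n\sum_{1\le i\le n-j}(X_i-\bar X_n)(X_{i+j}-\bar X_n)$, $s_n^2=\hat\gamma_0+2\sum_{1\le j\le q(n)}\omega_j(q(n))\hat\gamma_j$, $T_n=\frac1{n^{1/2}s_n}\max_{1\le k\le n}|\sum_{i\le k}X_i-\frac kn\sum_{i\le n}X_i|$, and $\hat k=\min\{k:\max_{1\le i\le n}|\sum_{j\le i}X_j-\frac in\sum_{j\le n}X_j|=|\sum_{j\le k}X_j-\frac kn\sum_{j\le n}X_j|\}$. *)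

theory Defs
  imports "HOL-Probability.Probability" "HOL-Library.Landau_Symbols"
begin

definition fourth_order_stationary :: "'a measure \<Rightarrow> (int \<Rightarrow> 'a \<Rightarrow> real) \<Rightarrow> bool" where
  "fourth_order_stationary M Y \<longleftrightarrow>
     (\<forall>k. Y k \<in> borel_measurable M \<and> integrable M (\<lambda>\<omega>. (Y k \<omega>) ^ 4)) \<and>
     (\<forall>is :: int list. \<forall>c :: int. length is \<le> 4 \<longrightarrow>
        (\<integral>\<omega>. prod_list (map (\<lambda>i. Y (i + c) \<omega>) is) \<partial>M) =
        (\<integral>\<omega>. prod_list (map (\<lambda>i. Y i \<omega>) is) \<partial>M))"

definition autocov :: "'a measure \<Rightarrow> (int \<Rightarrow> 'a \<Rightarrow> real) \<Rightarrow> int \<Rightarrow> real" where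
  "autocov M Y j =
     (\<integral>\<omega>. (Y 0 \<omega> - (\<integral>\<omega>'. Y 0 \<omega>' \<partial>M)) * (Y j \<omega> - (\<integral>\<omega>'. Y j \<omega>' \<partial>M)) \<partial>M)"

definition cum4 :: "'a measure \<Rightarrow> (int \<Rightarrow> 'a \<Rightarrow> real) \<Rightarrow> int \<Rightarrow> int \<Rightarrow> int \<Rightarrow> real" where
  "cum4 M Y h r s =
     (\<integral>\<omega>. Y 0 \<omega> * Y h \<omega> * Y r \<omega> * Y s \<omega> \<partial>M)
     - (autocov M Y h * autocov M Y (r - s) + autocov M Y r * autocov M Y (h - s)
        + autocov M Y s * autocov M Y (h - r))"

definition std_BM_01 :: "'b measure \<Rightarrow> (real \<Rightarrow> 'b \<Rightarrow> real) \<Rightarrow> bool" where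
  "std_BM_01 N W \<longleftrightarrow> prob_space N \<and>
     (\<forall>t\<in>{0..1}. W t \<in> borel_measurable N) \<and>
     (\<forall>\<omega>\<in>space N. W 0 \<omega> = 0 \<and> continuous_on {0..1} (\<lambda>t. W t \<omega>)) \<and>
     (\<forall>s t. 0 \<le> s \<and> s < t \<and> t \<le> 1 \<longrightarrow>
        distributed N lborel (\<lambda>\<omega>. W t \<omega> - W s \<omega>) (normal_density 0 (sqrt (t - s)))) \<and>
     (\<forall>(m::nat) (ts :: nat \<Rightarrow> real). 0 \<le> ts 0 \<and> ts m \<le> 1 \<and> (\<forall>i<m. ts i < ts (Suc i)) \<longrightarrow>
        prob_space.indep_vars N (\<lambda>_. borel) (\<lambda>i \<omega>. W (ts (Suc i)) \<omega> - W (ts i) \<omega>) {..<m})"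

definition cadlag01 :: "(real \<Rightarrow> real) \<Rightarrow> bool" where
  "cadlag01 x \<longleftrightarrow> (\<forall>t\<in>{0..<1}. (x \<longlongrightarrow> x t) (at_right t)) \<and>
                   (\<forall>t\<in>{0<..1}. \<exists>l. (x \<longlongrightarrow> l) (at_left t))"

definition timechange01 :: "(real \<Rightarrow> real) \<Rightarrow> bool" where
  "timechange01 lam \<longleftrightarrow> continuous_on {0..1} lam \<and> strict_mono_on {0..1} lam \<and> lam 0 = 0 \<and> lam 1 = 1"

definition skorokhod_dist :: "(real \<Rightarrow> real) \<Rightarrow> (real \<Rightarrow> real) \<Rightarrow> real" where
  "skorokhod_dist x y = Inf {max (SUP t\<in>{0..1}. \<bar>lam t - t\<bar>) (SUP t\<in>{0..1}. \<bar>x t - y (lam t)\<bar>) | lam. timechange01 lam}"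

definition conv_dist_D :: "'a measure \<Rightarrow> (nat \<Rightarrow> 'a \<Rightarrow> real \<Rightarrow> real) \<Rightarrow> 'b measure \<Rightarrow> ('b \<Rightarrow> real \<Rightarrow> real) \<Rightarrow> bool" where
  "conv_dist_D M S N Z \<longleftrightarrow>
     (\<forall>F :: (real \<Rightarrow> real) \<Rightarrow> real.
        (\<exists>B. \<forall>x. cadlag01 x \<longrightarrow> \<bar>F x\<bar> \<le> B) \<and>
        (\<forall>x. cadlag01 x \<longrightarrow> (\<forall>e>0. \<exists>d>0. \<forall>y. cadlag01 y \<and> skorokhod_dist x y < d \<longrightarrow> \<bar>F y - F x\<bar> < e))
        \<longrightarrow> ((\<lambda>n. \<integral>\<omega>. F (S n \<omega>) \<partial>M) \<longlonglongrightarrow> (\<integral>\<omega>. F (Z \<omega>) \<partial>N)))"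

definition partial_sum_proc :: "(int \<Rightarrow> 'a \<Rightarrow> real) \<Rightarrow> nat \<Rightarrow> 'a \<Rightarrow> real \<Rightarrow> real" where
  "partial_sum_proc Y n \<omega> t = (\<Sum>j\<in>{1..\<lfloor>real n * t\<rfloor>}. Y j \<omega>) / sqrt (real n)"

definition bounded_in_prob :: "'a measure \<Rightarrow> (nat \<Rightarrow> 'a \<Rightarrow> real) \<Rightarrow> bool" where
  "bounded_in_prob M Z \<longleftrightarrow>
     (\<forall>\<epsilon>>0. \<exists>C. \<exists>N0. \<forall>n\<ge>N0. measure M {\<omega>\<in>space M. \<bar>Z n \<omega>\<bar> > C} < \<epsilon>)"

definition cp_sample :: "real \<Rightarrow> real \<Rightarrow> nat \<Rightarrow> (int \<Rightarrow> 'a \<Rightarrow> real) \<Rightarrow> 'a \<Rightarrow> nat \<Rightarrow> real" where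
  "cp_sample \<mu> D k Y \<omega> i = \<mu> + (if i \<le> k then 0 else D) + Y (int i) \<omega>"

definition xbar :: "(nat \<Rightarrow> real) \<Rightarrow> nat \<Rightarrow> real" where
  "xbar x n = (\<Sum>i=1..n. x i) / real n"

definition gamma_hat :: "(nat \<Rightarrow> real) \<Rightarrow> nat \<Rightarrow> nat \<Rightarrow> real" where
  "gamma_hat x n j = (\<Sum>i=1..n-j. (x i - xbar x n) * (x (i + j) - xbar x n)) / real n"

definition bartlett :: "nat \<Rightarrow> nat \<Rightarrow> real" where
  "bartlett j q = 1 - real j / (real q + 1)"

definition s2 :: "(nat \<Rightarrow> real) \<Rightarrow> nat \<Rightarrow> nat \<Rightarrow> real" where
  "s2 x n q = gamma_hat x n 0 + 2 * (\<Sum>j=1..q. bartlett j q * gamma_hat x n j)"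

definition cusum :: "(nat \<Rightarrow> real) \<Rightarrow> nat \<Rightarrow> nat \<Rightarrow> real" where
  "cusum x n k = \<bar>(\<Sum>i=1..k. x i) - real k / real n * (\<Sum>i=1..n. x i)\<bar>"

definition Tstat :: "(nat \<Rightarrow> real) \<Rightarrow> nat \<Rightarrow> nat \<Rightarrow> real" where
  "Tstat x n q = Max (cusum x n ` {1..n}) / (sqrt (real n) * sqrt (s2 x n q))"

definition khat :: "(nat \<Rightarrow> real) \<Rightarrow> nat \<Rightarrow> nat" where
  "khat x n = (LEAST k. k \<in> {1..n} \<and> cusum x n k = Max (cusum x n ` {1..n}))"

end

theory Submission
  imports Defs
begin


definition dd :: "(nat \<Rightarrow> real) \<Rightarrow> nat \<Rightarrow> nat \<Rightarrow> real" where
  "dd x n i = x i - xbar x n"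

lemma gamma_hat_pairs:
  "real n * gamma_hat x n h =
     (\<Sum>i\<in>{1..n}. \<Sum>j\<in>{1..n}. if j = i + h then dd x n i * dd x n j else 0)"
proof (cases "n = 0")
  case True then show ?thesis by (simp add: gamma_hat_def)
next
  case False
  have "(\<Sum>i\<in>{1..n}. \<Sum>j\<in>{1..n}. if j = i + h then dd x n i * dd x n j else 0)
      = (\<Sum>i\<in>{1..n}. if i + h \<le> n then dd x n i * dd x n (i + h) else 0)"
    by (intro sum.cong refl) (auto simp: sum.delta)
  also have "\<dots> = (\<Sum>i\<in>{i\<in>{1..n}. i + h \<le> n}. dd x n i * dd x n (i + h))"
    by (rule sum.inter_filter[symmetric]) simp
  also have "{i\<in>{1..n}. i + h \<le> n} = {1..n-h}" by auto
  finally show ?thesis using False by (simp add: gamma_hat_def dd_def)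
qed

lemma coef_eq:
  fixes i j q :: nat
  shows "(real q + 1) * (if i = j then 1 else 0) +
     (\<Sum>h\<in>{1..q}. (real q + 1 - real h) * ((if j = i + h then 1 else 0) + (if i = j + h then 1 else 0)))
     = real (Suc (min i j + q) - max i j)"
proof (cases i j rule: linorder_cases)
  case less
  have "(\<Sum>h\<in>{1..q}. (real q + 1 - real h) * ((if j = i + h then 1 else 0) + (if i = j + h then 1 else 0)))
      = (\<Sum>h\<in>{1..q}. if h = j - i then real q + 1 - real h else 0)"
    using less by (intro sum.cong refl) auto
  also have "\<dots> = (if j - i \<in> {1..q} then real q + 1 - real (j - i) else 0)"
    by (simp add: sum.delta)
  finally show ?thesis using less by (auto simp: of_nat_diff)
next
  case equal then show ?thesis by auto
next
  case greater
  have "(\<Sum>h\<in>{1..q}. (real q + 1 - real h) * ((if j = i + h then 1 else 0) + (if i = j + h then 1 else 0)))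
      = (\<Sum>h\<in>{1..q}. if h = i - j then real q + 1 - real h else 0)"
    using greater by (intro sum.cong refl) auto
  also have "\<dots> = (if i - j \<in> {1..q} then real q + 1 - real (i - j) else 0)"
    by (simp add: sum.delta)
  finally show ?thesis using greater by (auto simp: of_nat_diff)
qed

lemma gamma_hat_pairs':
  "real n * gamma_hat x n h =
     (\<Sum>i\<in>{1..n}. \<Sum>j\<in>{1..n}. if i = j + h then dd x n i * dd x n j else 0)"
  unfolding gamma_hat_pairs
  by (subst sum.swap, intro sum.cong refl) (simp add: mult.commute)

lemma sum_swap3:
  "(\<Sum>i\<in>I. \<Sum>j\<in>J. \<Sum>h\<in>H. f h i j) = (\<Sum>h\<in>H. \<Sum>i\<in>I. \<Sum>j\<in>J. f h i j)"
proof -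
  have "(\<Sum>i\<in>I. \<Sum>j\<in>J. \<Sum>h\<in>H. f h i j) = (\<Sum>i\<in>I. \<Sum>h\<in>H. \<Sum>j\<in>J. f h i j)"
    by (intro sum.cong refl) (rule sum.swap)
  also have "\<dots> = (\<Sum>h\<in>H. \<Sum>i\<in>I. \<Sum>j\<in>J. f h i j)" by (rule sum.swap)
  finally show ?thesis .
qed

definition Kq :: "nat \<Rightarrow> nat \<Rightarrow> nat \<Rightarrow> real" where
  "Kq q i j = real (Suc (min i j + q) - max i j)"

lemma s2_pairs:
  "real n * (real q + 1) * s2 x n q =
     (\<Sum>i\<in>{1..n}. \<Sum>j\<in>{1..n}. dd x n i * dd x n j * Kq q i j)"
proof -
  define A where "A h i j = (if j = i + h then dd x n i * dd x n j else 0)" for h i j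
  define B where "B h i j = (if i = j + h then dd x n i * dd x n j else 0)" for h i j
  have bq: "(real q + 1) * bartlett h q = real q + 1 - real h" for h
    by (simp add: bartlett_def field_simps)
  have "(\<Sum>i\<in>{1..n}. \<Sum>j\<in>{1..n}. dd x n i * dd x n j * Kq q i j)
     = (\<Sum>i\<in>{1..n}. \<Sum>j\<in>{1..n}. (real q + 1) * A 0 i j +
          (\<Sum>h\<in>{1..q}. (real q + 1 - real h) * (A h i j + B h i j)))"
  proof (intro sum.cong refl)
    fix i j
    have ph: "dd x n i * dd x n j * ((real q + 1 - real h) * ((if j = i + h then 1 else 0) + (if i = j + h then 1 else 0)))
        = (real q + 1 - real h) * (A h i j + B h i j)" for h
      by (simp add: A_def B_def algebra_simps)
    have "dd x n i * dd x n j * Kq q i j = dd x n i * dd x n j * ((real q + 1) * (if i = j then 1 else 0)) +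
       (\<Sum>h\<in>{1..q}. dd x n i * dd x n j * ((real q + 1 - real h) * ((if j = i + h then 1 else 0) + (if i = j + h then 1 else 0))))"
      unfolding Kq_def coef_eq[symmetric] by (simp add: distrib_left sum_distrib_left)
    also have "\<dots> = (real q + 1) * A 0 i j + (\<Sum>h\<in>{1..q}. (real q + 1 - real h) * (A h i j + B h i j))"
      unfolding ph by (simp add: A_def)
    finally show "dd x n i * dd x n j * Kq q i j = (real q + 1) * A 0 i j + (\<Sum>h\<in>{1..q}. (real q + 1 - real h) * (A h i j + B h i j))" .
  qed
  also have "\<dots> = (real q + 1) * (\<Sum>i\<in>{1..n}. \<Sum>j\<in>{1..n}. A 0 i j) +
      (\<Sum>h\<in>{1..q}. (real q + 1 - real h) * ((\<Sum>i\<in>{1..n}. \<Sum>j\<in>{1..n}. A h i j) + (\<Sum>i\<in>{1..n}. \<Sum>j\<in>{1..n}. B h i j)))"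
  proof -
    have e1: "(\<Sum>i\<in>{1..n}. \<Sum>j\<in>{1..n}. (real q + 1) * A 0 i j +
          (\<Sum>h\<in>{1..q}. (real q + 1 - real h) * (A h i j + B h i j)))
      = (real q + 1) * (\<Sum>i\<in>{1..n}. \<Sum>j\<in>{1..n}. A 0 i j) +
        (\<Sum>i\<in>{1..n}. \<Sum>j\<in>{1..n}. \<Sum>h\<in>{1..q}. (real q + 1 - real h) * A h i j) +
        (\<Sum>i\<in>{1..n}. \<Sum>j\<in>{1..n}. \<Sum>h\<in>{1..q}. (real q + 1 - real h) * B h i j)"
      by (simp only: sum.distrib distrib_left sum_distrib_left add.assoc)
    have e2: "(\<Sum>h\<in>{1..q}. (real q + 1 - real h) * ((\<Sum>i\<in>{1..n}. \<Sum>j\<in>{1..n}. A h i j) + (\<Sum>i\<in>{1..n}. \<Sum>j\<in>{1..n}. B h i j)))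
      = (\<Sum>h\<in>{1..q}. \<Sum>i\<in>{1..n}. \<Sum>j\<in>{1..n}. (real q + 1 - real h) * A h i j) +
        (\<Sum>h\<in>{1..q}. \<Sum>i\<in>{1..n}. \<Sum>j\<in>{1..n}. (real q + 1 - real h) * B h i j)"
      by (simp only: sum.distrib distrib_left sum_distrib_left)
    show ?thesis unfolding e1 e2 sum_swap3[where I="{1..n}" and J="{1..n}" and H="{1..q}"] by (simp only: add.assoc)
  qed
  also have "\<dots> = (real q + 1) * (real n * gamma_hat x n 0) +
      (\<Sum>h\<in>{1..q}. (real q + 1 - real h) * (2 * (real n * gamma_hat x n h)))"
    unfolding A_def B_def gamma_hat_pairs[symmetric] gamma_hat_pairs'[symmetric] by simp
  also have "\<dots> = real n * (real q + 1) * s2 x n q"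
  proof -
    have pt: "(real q + 1 - real h) * (2 * (real n * gamma_hat x n h)) = (real n * (real q + 1) * 2) * (bartlett h q * gamma_hat x n h)" for h
      using bq[of h] by (metis mult.assoc mult.commute mult.left_commute)
    have "(\<Sum>h\<in>{1..q}. (real n * (real q + 1) * 2) * (bartlett h q * gamma_hat x n h))
       = (real n * (real q + 1) * 2) * (\<Sum>h\<in>{1..q}. bartlett h q * gamma_hat x n h)"
      by (rule sum_distrib_left[symmetric])
    then show ?thesis unfolding pt s2_def by (simp add: algebra_simps)
  qed
  finally show ?thesis ..
qed

definition Wn :: "nat \<Rightarrow> nat \<Rightarrow> nat \<Rightarrow> nat set" where
  "Wn n q t = {i\<in>{1..n}. i \<le> t \<and> t \<le> i + q}"

lemma card_window:
  assumes "i \<in> {1..n}" "j \<in> {1..n}"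
  shows "card {t\<in>{1..n+q}. (i \<le> t \<and> t \<le> i + q) \<and> (j \<le> t \<and> t \<le> j + q)} = Suc (min i j + q) - max i j"
proof -
  have "{t\<in>{1..n+q}. (i \<le> t \<and> t \<le> i + q) \<and> (j \<le> t \<and> t \<le> j + q)} = {max i j..min i j + q}"
    using assms by auto
  then show ?thesis by simp
qed

lemma window_pairs:
  "(\<Sum>t\<in>{1..n+q}. (\<Sum>i\<in>Wn n q t. dd x n i)\<^sup>2) =
     (\<Sum>i\<in>{1..n}. \<Sum>j\<in>{1..n}. dd x n i * dd x n j * Kq q i j)"
proof -
  let ?P = "\<lambda>t i. i \<le> t \<and> t \<le> i + q"
  have sq: "(\<Sum>i\<in>Wn n q t. dd x n i)\<^sup>2 = (\<Sum>i\<in>{1..n}. \<Sum>j\<in>{1..n}.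
        (if ?P t i then dd x n i else 0) * (if ?P t j then dd x n j else 0))" for t
  proof -
    have "(\<Sum>i\<in>Wn n q t. dd x n i) = (\<Sum>i\<in>{1..n}. if ?P t i then dd x n i else 0)"
      unfolding Wn_def by (rule sum.inter_filter) simp
    then show ?thesis by (simp add: power2_eq_square sum_product)
  qed
  have "(\<Sum>t\<in>{1..n+q}. (\<Sum>i\<in>Wn n q t. dd x n i)\<^sup>2) =
     (\<Sum>i\<in>{1..n}. \<Sum>j\<in>{1..n}. \<Sum>t\<in>{1..n+q}.
        (if ?P t i then dd x n i else 0) * (if ?P t j then dd x n j else 0))"
    unfolding sq by (rule sum_swap3[symmetric])
  also have "\<dots> = (\<Sum>i\<in>{1..n}. \<Sum>j\<in>{1..n}. dd x n i * dd x n j * Kq q i j)"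
  proof (intro sum.cong refl)
    fix i j assume ij: "i \<in> {1..n}" "j \<in> {1..n}"
    have "(\<Sum>t\<in>{1..n+q}. (if ?P t i then dd x n i else 0) * (if ?P t j then dd x n j else 0))
        = (\<Sum>t\<in>{t\<in>{1..n+q}. ?P t i \<and> ?P t j}. dd x n i * dd x n j)"
      by (subst sum.inter_filter) (auto intro!: sum.cong)
    also have "\<dots> = dd x n i * dd x n j * Kq q i j"
      using card_window[OF ij, of q] by (simp add: Kq_def)
    finally show "(\<Sum>t\<in>{1..n+q}. (if ?P t i then dd x n i else 0) * (if ?P t j then dd x n j else 0))
        = dd x n i * dd x n j * Kq q i j" .
  qed
  finally show ?thesis .
qed

lemma s2_windows:
  assumes "n > 0"
  shows "s2 x n q = (\<Sum>t\<in>{1..n+q}. (\<Sum>i\<in>Wn n q t. dd x n i)\<^sup>2) / (real n * (real q + 1))"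
proof -
  have "real n * (real q + 1) > 0" using assms by simp
  then show ?thesis
    using s2_pairs[where n=n and q=q and x=x] window_pairs[where n=n and q=q and x=x]
    using assms by (simp add: eq_divide_eq mult.commute)
qed

lemma s2_nonneg: "n > 0 \<Longrightarrow> s2 x n q \<ge> 0"
  by (simp add: s2_windows sum_nonneg)

lemma s2_zero:
  assumes "n > 0" "s2 x n q = 0"
  shows "\<forall>i\<in>{1..n}. dd x n i = 0"
proof -
  have "(\<Sum>t\<in>{1..n+q}. (\<Sum>i\<in>Wn n q t. dd x n i)\<^sup>2) = 0"
    using assms s2_windows[OF assms(1), of x q] by simp
  then have A0: "\<forall>t\<in>{1..n+q}. (\<Sum>i\<in>Wn n q t. dd x n i)\<^sup>2 = 0"
    by (subst (asm) sum_nonneg_eq_0_iff) auto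
  have "i \<in> {1..n} \<longrightarrow> dd x n i = 0" for i
  proof (induction i rule: less_induct)
    case (less i)
    show ?case
    proof
      assume i: "i \<in> {1..n}"
      have fin: "finite (Wn n q i)" by (simp add: Wn_def)
      have iW: "i \<in> Wn n q i" using i by (simp add: Wn_def)
      have "(\<Sum>j\<in>Wn n q i. dd x n j) = dd x n i + (\<Sum>j\<in>Wn n q i - {i}. dd x n j)"
        using fin iW by (simp add: sum.remove)
      also have "(\<Sum>j\<in>Wn n q i - {i}. dd x n j) = 0"
        using less.IH by (intro sum.neutral) (auto simp: Wn_def)
      finally have "(\<Sum>j\<in>Wn n q i. dd x n j) = dd x n i" by simp
      moreover have "(\<Sum>j\<in>Wn n q i. dd x n j)\<^sup>2 = 0" using A0 i by auto
      ultimately show "dd x n i = 0" by simp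
    qed
  qed
  then show ?thesis by blast
qed

lemma cusum_dd:
  assumes "n > 0"
  shows "cusum x n k = \<bar>\<Sum>i=1..k. dd x n i\<bar>"
  by (simp add: cusum_def dd_def sum_subtractf xbar_def)

lemma sum_shift:
  assumes "k \<le> n"
  shows "(\<Sum>i=1..n. (if i \<le> k then 0 else D)) = real (n - k) * (D::real)"
proof -
  have "(\<Sum>i=1..n. (if i \<le> k then 0 else D)) = (\<Sum>i\<in>{i\<in>{1..n}. \<not> i \<le> k}. D)"
    by (subst sum.inter_filter) (auto intro!: sum.cong)
  also have "{i\<in>{1..n}. \<not> i \<le> k} = {k<..n}" using assms by auto
  finally show ?thesis by simp
qed

lemma xbar_cp:
  assumes "n > 0" "k \<le> n"
  shows "xbar (cp_sample \<mu> D k Y \<omega>) n = \<mu> + real (n - k) * D / real n + (\<Sum>i=1..n. Y (int i) \<omega>) / real n"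
  using assms sum_shift[OF assms(2), of D]
  by (simp add: xbar_def cp_sample_def sum.distrib add_divide_distrib)

lemma dd_cp:
  assumes "n > 0" "k \<le> n"
  shows "dd (cp_sample \<mu> D k Y \<omega>) n i = Y (int i) \<omega> - (\<Sum>i=1..n. Y (int i) \<omega>) / real n
     + ((if i \<le> k then 0 else D) - real (n - k) * D / real n)"
  using xbar_cp[OF assms, of \<mu> D Y \<omega>] by (simp add: dd_def cp_sample_def)

lemma shift_dev_bound:
  assumes "n > 0" "k \<le> n"
  shows "\<bar>(if i \<le> k then 0 else D) - real (n - k) * D / real n\<bar> \<le> \<bar>D::real\<bar>"
proof (cases "i \<le> k")
  case True
  have "real (n - k) / real n \<le> 1" using assms by simp
  moreover have "0 \<le> real (n - k) / real n" by simp
  ultimately have "real (n - k) / real n * \<bar>D\<bar> \<le> \<bar>D\<bar>"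
    by (intro mult_left_le_one_le) auto
  then have "\<bar>real (n - k) / real n * D\<bar> \<le> \<bar>D\<bar>" by (simp add: abs_mult)
  then show ?thesis using True by simp
next
  case False
  have e: "D - real (n - k) * D / real n = real k / real n * D"
    using assms by (simp add: of_nat_diff field_simps)
  have "real k / real n \<le> 1" "0 \<le> real k / real n" using assms by auto
  then have "real k / real n * \<bar>D\<bar> \<le> \<bar>D\<bar>"
    by (intro mult_left_le_one_le) auto
  then have "\<bar>real k / real n * D\<bar> \<le> \<bar>D\<bar>" by (simp add: abs_mult)
  then show ?thesis using False e by simp
qed

lemma card_Wn: "card (Wn n q t) \<le> q + 1"
proof -
  have "Wn n q t \<subseteq> {t - q..t}" by (auto simp: Wn_def)
  then have "card (Wn n q t) \<le> card {t - q..t}" by (intro card_mono) auto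
  also have "\<dots> \<le> q + 1" by simp
  finally show ?thesis .
qed

lemma sq3: "((a::real) - b + c)\<^sup>2 \<le> 3 * a\<^sup>2 + 3 * b\<^sup>2 + 3 * c\<^sup>2"
proof -
  have "3 * a\<^sup>2 + 3 * b\<^sup>2 + 3 * c\<^sup>2 - (a - b + c)\<^sup>2 = (a + b)\<^sup>2 + (a - c)\<^sup>2 + (b + c)\<^sup>2"
    by (simp add: power2_eq_square algebra_simps)
  moreover have "(a + b)\<^sup>2 + (a - c)\<^sup>2 + (b + c)\<^sup>2 \<ge> 0" by simp
  ultimately show ?thesis by linarith
qed

lemma window_bound:
  assumes "n > 0" "k \<le> n"
  shows "(\<Sum>i\<in>Wn n q t. dd (cp_sample \<mu> D k Y \<omega>) n i)\<^sup>2 \<le>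
     3 * (\<Sum>i\<in>Wn n q t. Y (int i) \<omega>)\<^sup>2 + 3 * ((real q + 1) / real n)\<^sup>2 * (\<Sum>i=1..n. Y (int i) \<omega>)\<^sup>2
     + 3 * ((real q + 1) * D)\<^sup>2"
proof -
  define S where "S = (\<Sum>i=1..n. Y (int i) \<omega>)"
  define c where "c i = (if i \<le> k then 0 else D) - real (n - k) * D / real n" for i
  define W where "W = Wn n q t"
  have cW: "real (card W) \<le> real q + 1" using card_Wn[of n q t] unfolding W_def by linarith
  have "(\<Sum>i\<in>W. dd (cp_sample \<mu> D k Y \<omega>) n i) = (\<Sum>i\<in>W. Y (int i) \<omega>) - real (card W) * S / real n + (\<Sum>i\<in>W. c i)"
    using dd_cp[OF assms, of \<mu> D Y \<omega>] by (simp add: S_def c_def sum.distrib sum_subtractf)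
  moreover have "\<bar>real (card W) * S / real n\<bar> \<le> \<bar>(real q + 1) / real n * S\<bar>"
    using cW assms by (simp add: abs_mult divide_right_mono mult_right_mono)
  moreover have "\<bar>\<Sum>i\<in>W. c i\<bar> \<le> \<bar>(real q + 1) * D\<bar>"
  proof -
    have "\<bar>\<Sum>i\<in>W. c i\<bar> \<le> (\<Sum>i\<in>W. \<bar>D\<bar>)"
      using shift_dev_bound[OF assms] unfolding c_def by (intro order.trans[OF sum_abs] sum_mono) auto
    also have "\<dots> = real (card W) * \<bar>D\<bar>" by simp
    also have "\<dots> \<le> (real q + 1) * \<bar>D\<bar>" using cW by (intro mult_right_mono) auto
    finally show ?thesis by (simp add: abs_mult)
  qed
  ultimately show ?thesis
    unfolding W_def[symmetric] S_def[symmetric]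
    using sq3[of "\<Sum>i\<in>W. Y (int i) \<omega>" "real (card W) * S / real n" "\<Sum>i\<in>W. c i"]
      abs_le_square_iff[of "real (card W) * S / real n" "(real q + 1) / real n * S"]
      abs_le_square_iff[of "\<Sum>i\<in>W. c i" "(real q + 1) * D"]
      power_mult_distrib[of "(real q + 1) / real n" S 2]
    by (simp add: power_mult_distrib)
qed

lemma cusum_cp:
  assumes "n > 0" "k \<le> n"
  shows "cusum (cp_sample \<mu> D k Y \<omega>) n k =
    \<bar>(\<Sum>i=1..k. Y (int i) \<omega>) - real k / real n * (\<Sum>i=1..n. Y (int i) \<omega>) - real k * real (n - k) * D / real n\<bar>"
proof -
  have a: "(\<Sum>i=1..k. cp_sample \<mu> D k Y \<omega> i) = real k * \<mu> + (\<Sum>i=1..k. Y (int i) \<omega>)"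
    using sum_shift[of k k D] by (simp add: cp_sample_def sum.distrib)
  have b: "(\<Sum>i=1..n. cp_sample \<mu> D k Y \<omega> i) = real n * \<mu> + real (n - k) * D + (\<Sum>i=1..n. Y (int i) \<omega>)"
    using sum_shift[OF assms(2), of D] by (simp add: cp_sample_def sum.distrib)
  have "real k * \<mu> + (\<Sum>i=1..k. Y (int i) \<omega>) - real k / real n * (real n * \<mu> + real (n - k) * D + (\<Sum>i=1..n. Y (int i) \<omega>))
     = (\<Sum>i=1..k. Y (int i) \<omega>) - real k / real n * (\<Sum>i=1..n. Y (int i) \<omega>) - real k * real (n - k) * D / real n"
    using assms by (simp add: field_simps)
  then show ?thesis unfolding cusum_def a b by simp
qed




lemma alg: "a > (0::real) \<Longrightarrow> b > 0 \<Longrightarrow> x * (3 * (b * G) + 3 * (b / a)\<^sup>2 * (a * G) + 3 * (b * D)\<^sup>2) / (a * b)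
   = 3 * (x / a) * (G + b * G / a + b * D\<^sup>2)"
  by (simp add: field_simps power2_eq_square)

definition Ufun :: "(int \<Rightarrow> 'a \<Rightarrow> real) \<Rightarrow> nat \<Rightarrow> nat \<Rightarrow> real \<Rightarrow> 'a \<Rightarrow> real" where "Ufun Y n q D \<omega> = (\<Sum>t\<in>{1..n+q}. 3 * (\<Sum>i\<in>Wn n q t. Y (int i) \<omega>)\<^sup>2
    + 3 * ((real q + 1) / real n)\<^sup>2 * (\<Sum>i=1..n. Y (int i) \<omega>)\<^sup>2 + 3 * ((real q + 1) * D)\<^sup>2) / (real n * (real q + 1))"

locale statmodel =
  fixes M :: "'a measure" and Y :: "int \<Rightarrow> 'a \<Rightarrow> real"
  assumes ps: "prob_space M"
    and fos: "fourth_order_stationary M Y"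
    and mean0: "\<forall>k. (\<integral>\<omega>. Y k \<omega> \<partial>M) = 0"
    and summ: "(\<lambda>j. \<bar>autocov M Y j\<bar>) summable_on UNIV"
begin

interpretation prob_space M by (rule ps)

definition "G = (\<Sum>\<^sub>\<infinity>j. \<bar>autocov M Y j\<bar>)"

lemma Ymeas[measurable]: "Y k \<in> borel_measurable M"
  using fos by (simp add: fourth_order_stationary_def)

lemma Y4: "integrable M (\<lambda>\<omega>. (Y k \<omega>) ^ 4)"
  using fos by (simp add: fourth_order_stationary_def)

lemma Y2: "integrable M (\<lambda>\<omega>. (Y k \<omega>)\<^sup>2)"
proof (rule Bochner_Integration.integrable_bound[of _ "\<lambda>\<omega>. 1 + (Y k \<omega>) ^ 4"])
  show "integrable M (\<lambda>\<omega>. 1 + (Y k \<omega>) ^ 4)" using Y4 by simp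
  show "AE x in M. norm ((Y k x)\<^sup>2) \<le> norm (1 + (Y k x) ^ 4)"
  proof (intro AE_I2)
    fix x
    define t where "t = (Y k x)\<^sup>2"
    have t4: "(Y k x) ^ 4 = t\<^sup>2" unfolding t_def by simp
    have "0 \<le> (t - 1)\<^sup>2" by simp
    then have "0 \<le> t\<^sup>2 - 2 * t + 1" by (simp add: power2_diff)
    moreover have "0 \<le> t" unfolding t_def by simp
    ultimately have "(Y k x)\<^sup>2 \<le> 1 + (Y k x) ^ 4" unfolding t4 t_def[symmetric] by linarith
    then show "norm ((Y k x)\<^sup>2) \<le> norm (1 + (Y k x) ^ 4)" by simp
  qed
qed simp

lemma YY: "integrable M (\<lambda>\<omega>. Y i \<omega> * Y j \<omega>)"
proof (rule Bochner_Integration.integrable_bound[of _ "\<lambda>\<omega>. (Y i \<omega>)\<^sup>2 + (Y j \<omega>)\<^sup>2"])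
  show "integrable M (\<lambda>\<omega>. (Y i \<omega>)\<^sup>2 + (Y j \<omega>)\<^sup>2)" using Y2 by simp
  show "AE x in M. norm (Y i x * Y j x) \<le> norm ((Y i x)\<^sup>2 + (Y j x)\<^sup>2)"
  proof (intro AE_I2)
    fix x
    have "0 \<le> (\<bar>Y i x\<bar> - \<bar>Y j x\<bar>)\<^sup>2" by simp
    then have h2: "2 * (\<bar>Y i x\<bar> * \<bar>Y j x\<bar>) \<le> (Y i x)\<^sup>2 + (Y j x)\<^sup>2"
      by (simp add: power2_diff)
    have "0 \<le> \<bar>Y i x\<bar> * \<bar>Y j x\<bar>" by simp
    with h2 have h: "\<bar>Y i x\<bar> * \<bar>Y j x\<bar> \<le> (Y i x)\<^sup>2 + (Y j x)\<^sup>2"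
      by linarith
    then have "\<bar>Y i x * Y j x\<bar> \<le> (Y i x)\<^sup>2 + (Y j x)\<^sup>2"
      by (simp add: abs_mult)
    then show "norm (Y i x * Y j x) \<le> norm ((Y i x)\<^sup>2 + (Y j x)\<^sup>2)" by simp
  qed
qed simp

lemma EYY: "(\<integral>\<omega>. Y i \<omega> * Y j \<omega> \<partial>M) = autocov M Y (j - i)"
proof -
  have "(\<integral>\<omega>. prod_list (map (\<lambda>l. Y (l + i) \<omega>) [0, j - i]) \<partial>M) =
        (\<integral>\<omega>. prod_list (map (\<lambda>l. Y l \<omega>) [0, j - i]) \<partial>M)"
  proof -
    have st: "\<forall>is :: int list. \<forall>c :: int. length is \<le> 4 \<longrightarrow>
        (\<integral>\<omega>. prod_list (map (\<lambda>i. Y (i + c) \<omega>) is) \<partial>M) =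
        (\<integral>\<omega>. prod_list (map (\<lambda>i. Y i \<omega>) is) \<partial>M)"
      using fos unfolding fourth_order_stationary_def by blast
    show ?thesis using st[rule_format, of "[0, j - i]" i] by simp
  qed
  then show ?thesis using mean0 by (simp add: autocov_def)
qed

lemma G_bound:
  assumes "finite J"
  shows "(\<Sum>j\<in>J. \<bar>autocov M Y (int j - int i)\<bar>) \<le> G"
proof -
  have inj: "inj_on (\<lambda>j. int j - int i) J" by (auto simp: inj_on_def)
  have "(\<Sum>j\<in>J. \<bar>autocov M Y (int j - int i)\<bar>) = (\<Sum>h\<in>(\<lambda>j. int j - int i) ` J. \<bar>autocov M Y h\<bar>)"
    by (simp add: sum.reindex[OF inj])
  also have "\<dots> \<le> G" unfolding G_def
    by (rule finite_sum_le_infsum) (use summ assms in auto)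
  finally show ?thesis .
qed

lemma G_nonneg: "G \<ge> 0"
  unfolding G_def by (rule infsum_nonneg) simp

lemma sq_sum_int:
  assumes "finite I"
  shows "integrable M (\<lambda>\<omega>. (\<Sum>i\<in>I. Y (int i) \<omega>)\<^sup>2)"
    and "(\<integral>\<omega>. (\<Sum>i\<in>I. Y (int i) \<omega>)\<^sup>2 \<partial>M) \<le> real (card I) * G"
proof -
  have eq: "(\<lambda>\<omega>. (\<Sum>i\<in>I. Y (int i) \<omega>)\<^sup>2) = (\<lambda>\<omega>. \<Sum>i\<in>I. \<Sum>j\<in>I. Y (int i) \<omega> * Y (int j) \<omega>)"
    by (simp add: power2_eq_square sum_product)
  show "integrable M (\<lambda>\<omega>. (\<Sum>i\<in>I. Y (int i) \<omega>)\<^sup>2)"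
    unfolding eq by (intro Bochner_Integration.integrable_sum YY)
  have "(\<integral>\<omega>. (\<Sum>i\<in>I. Y (int i) \<omega>)\<^sup>2 \<partial>M) = (\<Sum>i\<in>I. \<Sum>j\<in>I. autocov M Y (int j - int i))"
    unfolding eq by (simp add: integral_sum YY integrable_sum EYY)
  also have "\<dots> \<le> (\<Sum>i\<in>I. \<Sum>j\<in>I. \<bar>autocov M Y (int j - int i)\<bar>)"
    by (intro sum_mono) auto
  also have "\<dots> \<le> (\<Sum>i\<in>I. G)"
    by (intro sum_mono G_bound assms)
  finally show "(\<integral>\<omega>. (\<Sum>i\<in>I. Y (int i) \<omega>)\<^sup>2 \<partial>M) \<le> real (card I) * G" by simp
qed

lemma cheb_sum:
  assumes "finite I" "a > 0"
  shows "measure M {\<omega>\<in>space M. \<bar>\<Sum>i\<in>I. Y (int i) \<omega>\<bar> > a} \<le> real (card I) * G / a\<^sup>2"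
proof -
  have "measure M {\<omega>\<in>space M. \<bar>\<Sum>i\<in>I. Y (int i) \<omega>\<bar> > a} \<le>
        measure M {\<omega>\<in>space M. (\<Sum>i\<in>I. Y (int i) \<omega>)\<^sup>2 \<ge> a\<^sup>2}"
  proof (rule finite_measure_mono)
    show "{\<omega>\<in>space M. \<bar>\<Sum>i\<in>I. Y (int i) \<omega>\<bar> > a} \<subseteq> {\<omega>\<in>space M. (\<Sum>i\<in>I. Y (int i) \<omega>)\<^sup>2 \<ge> a\<^sup>2}"
      using assms(2) by (auto simp: abs_le_square_iff[symmetric] intro: less_imp_le)
    show "{\<omega>\<in>space M. (\<Sum>i\<in>I. Y (int i) \<omega>)\<^sup>2 \<ge> a\<^sup>2} \<in> sets M" by measurable
  qed
  also have "\<dots> \<le> (\<integral>\<omega>. (\<Sum>i\<in>I. Y (int i) \<omega>)\<^sup>2 \<partial>M) / a\<^sup>2"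
    by (rule integral_Markov_inequality_measure[where A="space M"]) (use sq_sum_int(1)[OF assms(1)] assms in auto)
  also have "\<dots> \<le> real (card I) * G / a\<^sup>2"
    by (intro divide_right_mono sq_sum_int(2)[OF assms(1)]) simp
  finally show ?thesis .
qed


lemma Ufun_nonneg: "Ufun Y n q D \<omega> \<ge> 0"
  unfolding Ufun_def by (intro divide_nonneg_nonneg sum_nonneg) auto

lemma Ufun_int: "integrable M (Ufun Y n q D)"
proof -
  have int1: "integrable M (\<lambda>\<omega>. (\<Sum>i\<in>Wn n q t. Y (int i) \<omega>)\<^sup>2)" for t
    by (rule sq_sum_int(1)) (simp add: Wn_def)
  have int2: "integrable M (\<lambda>\<omega>. (\<Sum>i=1..n. Y (int i) \<omega>)\<^sup>2)"
    by (rule sq_sum_int(1)) simp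
  have fi: "integrable M (\<lambda>\<omega>. 3 * (\<Sum>i\<in>Wn n q t. Y (int i) \<omega>)\<^sup>2 + 3 * ((real q + 1) / real n)\<^sup>2 * (\<Sum>i=1..n. Y (int i) \<omega>)\<^sup>2 + 3 * ((real q + 1) * D)\<^sup>2)" for t
    using int1 int2 by simp
  have "integrable M (\<lambda>\<omega>. (\<Sum>t\<in>{1..n+q}. 3 * (\<Sum>i\<in>Wn n q t. Y (int i) \<omega>)\<^sup>2 + 3 * ((real q + 1) / real n)\<^sup>2 * (\<Sum>i=1..n. Y (int i) \<omega>)\<^sup>2 + 3 * ((real q + 1) * D)\<^sup>2))"
    by (rule Bochner_Integration.integrable_sum) (rule fi)
  then have "integrable M (\<lambda>\<omega>. (\<Sum>t\<in>{1..n+q}. 3 * (\<Sum>i\<in>Wn n q t. Y (int i) \<omega>)\<^sup>2 + 3 * ((real q + 1) / real n)\<^sup>2 * (\<Sum>i=1..n. Y (int i) \<omega>)\<^sup>2 + 3 * ((real q + 1) * D)\<^sup>2) / (real n * (real q + 1)))"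
    by (rule Bochner_Integration.integrable_divide)
  then show ?thesis unfolding Ufun_def by simp
qed

lemma Ufun_E:
  assumes "n > 0"
  shows "(\<integral>\<omega>. Ufun Y n q D \<omega> \<partial>M) \<le> 3 * ((real n + real q) / real n) * (G + (real q + 1) * G / real n + (real q + 1) * D\<^sup>2)"
proof -
  define c where "c = ((real q + 1) / real n)\<^sup>2"
  have int1: "integrable M (\<lambda>\<omega>. (\<Sum>i\<in>Wn n q t. Y (int i) \<omega>)\<^sup>2)" for t
    by (rule sq_sum_int(1)) (simp add: Wn_def)
  have int2: "integrable M (\<lambda>\<omega>. (\<Sum>i=1..n. Y (int i) \<omega>)\<^sup>2)"
    by (rule sq_sum_int(1)) simp
  have "(\<integral>\<omega>. Ufun Y n q D \<omega> \<partial>M) = (\<Sum>t\<in>{1..n+q}. 3 * (\<integral>\<omega>. (\<Sum>i\<in>Wn n q t. Y (int i) \<omega>)\<^sup>2 \<partial>M)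
    + 3 * c * (\<integral>\<omega>. (\<Sum>i=1..n. Y (int i) \<omega>)\<^sup>2 \<partial>M) + 3 * ((real q + 1) * D)\<^sup>2) / (real n * (real q + 1))"
  proof -
    have fi: "integrable M (\<lambda>\<omega>. 3 * (\<Sum>i\<in>Wn n q t. Y (int i) \<omega>)\<^sup>2 + 3 * c * (\<Sum>i=1..n. Y (int i) \<omega>)\<^sup>2 + 3 * ((real q + 1) * D)\<^sup>2)" for t
      using int1 int2 by simp
    have fe: "(\<integral>\<omega>. 3 * (\<Sum>i\<in>Wn n q t. Y (int i) \<omega>)\<^sup>2 + 3 * c * (\<Sum>i=1..n. Y (int i) \<omega>)\<^sup>2 + 3 * ((real q + 1) * D)\<^sup>2 \<partial>M)
      = 3 * (\<integral>\<omega>. (\<Sum>i\<in>Wn n q t. Y (int i) \<omega>)\<^sup>2 \<partial>M) + 3 * c * (\<integral>\<omega>. (\<Sum>i=1..n. Y (int i) \<omega>)\<^sup>2 \<partial>M) + 3 * ((real q + 1) * D)\<^sup>2" for t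
      using int1 int2 prob_space by simp
    have "(\<integral>\<omega>. Ufun Y n q D \<omega> \<partial>M) = (\<integral>\<omega>. (\<Sum>t\<in>{1..n+q}. 3 * (\<Sum>i\<in>Wn n q t. Y (int i) \<omega>)\<^sup>2 + 3 * c * (\<Sum>i=1..n. Y (int i) \<omega>)\<^sup>2 + 3 * ((real q + 1) * D)\<^sup>2) \<partial>M) / (real n * (real q + 1))"
      unfolding Ufun_def c_def by simp
    also have "\<dots> = (\<Sum>t\<in>{1..n+q}. (\<integral>\<omega>. 3 * (\<Sum>i\<in>Wn n q t. Y (int i) \<omega>)\<^sup>2 + 3 * c * (\<Sum>i=1..n. Y (int i) \<omega>)\<^sup>2 + 3 * ((real q + 1) * D)\<^sup>2 \<partial>M)) / (real n * (real q + 1))"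
      by (subst Bochner_Integration.integral_sum) (use fi in auto)
    finally show ?thesis unfolding fe .
  qed
  also have "\<dots> \<le> (\<Sum>t\<in>{1..n+q}. 3 * ((real q + 1) * G)
    + 3 * c * (real n * G) + 3 * ((real q + 1) * D)\<^sup>2) / (real n * (real q + 1))"
  proof (intro divide_right_mono sum_mono add_mono mult_left_mono order_refl)
    fix t
    have "(\<integral>\<omega>. (\<Sum>i\<in>Wn n q t. Y (int i) \<omega>)\<^sup>2 \<partial>M) \<le> real (card (Wn n q t)) * G"
      by (rule sq_sum_int(2)) (simp add: Wn_def)
    also have "\<dots> \<le> (real q + 1) * G"
      using card_Wn[of n q t] G_nonneg by (intro mult_right_mono) auto
    finally show "(\<integral>\<omega>. (\<Sum>i\<in>Wn n q t. Y (int i) \<omega>)\<^sup>2 \<partial>M) \<le> (real q + 1) * G" .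
    show "(\<integral>\<omega>. (\<Sum>i=1..n. Y (int i) \<omega>)\<^sup>2 \<partial>M) \<le> real n * G"
      using sq_sum_int(2)[of "{1..n}"] by simp
  qed (auto simp: c_def)
  also have "\<dots> = 3 * ((real n + real q) / real n) * (G + (real q + 1) * G / real n + (real q + 1) * D\<^sup>2)"
  proof -
    have "(\<Sum>t\<in>{1..n+q}. 3 * ((real q + 1) * G) + 3 * c * (real n * G) + 3 * ((real q + 1) * D)\<^sup>2)
       = (real n + real q) * (3 * ((real q + 1) * G) + 3 * c * (real n * G) + 3 * ((real q + 1) * D)\<^sup>2)"
      by simp
    then show ?thesis unfolding c_def using alg[of "real n" "real q + 1" "real n + real q" G D] assms
      by simp
  qed
  finally show ?thesis .
qed

end

lemma s2_le_U:
  assumes "n > 0" "k \<le> n"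
  shows "s2 (cp_sample \<mu> D k Y \<omega>) n q \<le> Ufun Y n q D \<omega>"
  unfolding Ufun_def s2_windows[OF assms(1)]
  by (intro divide_right_mono sum_mono window_bound assms) auto



lemma abs_tri3: "\<bar>c\<bar> - \<bar>a\<bar> - \<bar>b\<bar> \<le> \<bar>a - b - (c::real)\<bar>"
  by arith

lemma good_imp:
  fixes Lr K C C' :: real
  assumes n: "n > 0" and k: "1 \<le> k" "k \<le> n"
    and sU: "s2 (cp_sample \<mu> D k Y \<omega>) n q < K"
    and Sk: "\<bar>\<Sum>i\<in>{1..k}. Y (int i) \<omega>\<bar> \<le> Lr"
    and Sn: "\<bar>\<Sum>i\<in>{1..n}. Y (int i) \<omega>\<bar> \<le> Lr"
    and big: "real k * real (n - k) * \<bar>D\<bar> / real n - 2 * Lr > C' * sqrt (real n) * sqrt K"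
    and C': "C' \<ge> 1" "C' \<ge> C"
  shows "Tstat (cp_sample \<mu> D k Y \<omega>) n q > C"
proof -
  define x where "x = cp_sample \<mu> D k Y \<omega>"
  define Sk' where "Sk' = (\<Sum>i=1..k. Y (int i) \<omega>)"
  define Sn' where "Sn' = (\<Sum>i=1..n. Y (int i) \<omega>)"
  have Kpos: "K > 0" using sU s2_nonneg[OF n, of x q] unfolding x_def by linarith
  have kn: "real k / real n \<le> 1" "0 \<le> real k / real n" using k n by auto
  have "\<bar>real k / real n * Sn'\<bar> \<le> Lr"
  proof -
    have "\<bar>real k / real n * Sn'\<bar> = real k / real n * \<bar>Sn'\<bar>" using kn by (simp add: abs_mult)
    also have "\<dots> \<le> \<bar>Sn'\<bar>" using kn by (intro mult_left_le_one_le) auto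
    finally show ?thesis using Sn unfolding Sn'_def by simp
  qed
  moreover have "\<bar>real k * real (n - k) * D / real n\<bar> = real k * real (n - k) * \<bar>D\<bar> / real n"
    by (simp add: abs_mult)
  moreover have "\<bar>Sk'\<bar> \<le> Lr" using Sk unfolding Sk'_def by simp
  moreover have "\<bar>real k * real (n - k) * D / real n\<bar> - \<bar>Sk'\<bar> - \<bar>real k / real n * Sn'\<bar> \<le> \<bar>Sk' - real k / real n * Sn' - real k * real (n - k) * D / real n\<bar>"
    by (rule abs_tri3)
  ultimately have "cusum x n k \<ge> real k * real (n - k) * \<bar>D\<bar> / real n - 2 * Lr"
    unfolding x_def cusum_cp[OF n k(2)] Sk'_def[symmetric] Sn'_def[symmetric] by linarith
  with big have cbig: "cusum x n k > C' * sqrt (real n) * sqrt K" by linarith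
  have pos: "C' * sqrt (real n) * sqrt K > 0" using C' n Kpos by simp
  have s2pos: "s2 x n q > 0"
  proof (rule ccontr)
    assume "\<not> s2 x n q > 0"
    then have "s2 x n q = 0" using s2_nonneg[OF n, of x q] by linarith
    then have "\<forall>i\<in>{1..n}. dd x n i = 0" by (rule s2_zero[OF n])
    then have "(\<Sum>i=1..k. dd x n i) = 0" using k by (intro sum.neutral) auto
    then have "cusum x n k = 0" by (simp add: cusum_dd[OF n])
    with cbig pos show False by linarith
  qed
  have sK: "s2 x n q < K" using sU unfolding x_def .
  have mx: "Max (cusum x n ` {1..n}) \<ge> cusum x n k"
    using k by (intro Max_ge) auto
  have sq: "0 < sqrt (s2 x n q)" "sqrt (s2 x n q) < sqrt K" using s2pos sK by auto
  have sn: "sqrt (real n) > 0" using n by simp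
  have "C \<le> C'" using C' by simp
  also have "C' < C' * sqrt K / sqrt (s2 x n q)"
    using sq C' by (simp add: field_simps)
  also have "\<dots> = C' * sqrt (real n) * sqrt K / (sqrt (real n) * sqrt (s2 x n q))"
    using sn by (simp add: field_simps)
  also have "\<dots> < cusum x n k / (sqrt (real n) * sqrt (s2 x n q))"
    using cbig sn sq by (intro divide_strict_right_mono) auto
  also have "\<dots> \<le> Max (cusum x n ` {1..n}) / (sqrt (real n) * sqrt (s2 x n q))"
    using mx sn sq by (intro divide_right_mono) auto
  also have "\<dots> = Tstat x n q" by (simp add: Tstat_def)
  finally show ?thesis unfolding x_def .
qed

lemma Tstat_meas:
  assumes [measurable]: "\<And>k. Y k \<in> borel_measurable M"
  shows "(\<lambda>\<omega>. Tstat (cp_sample \<mu> D k Y \<omega>) n q) \<in> borel_measurable M"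
  unfolding Tstat_def cusum_def s2_def gamma_hat_def xbar_def cp_sample_def
  by measurable

lemma big_lemma:
  fixes \<theta> L K C' D :: real
  assumes th: "0 < \<theta>" "\<theta> < 1" and n: "n > 0" and nth: "real n * \<theta> \<ge> 2"
    and A: "A = 2 * L + C' * sqrt K" "A \<ge> 0"
    and R: "real n * D\<^sup>2 > (A * 2 / (\<theta> * (1 - \<theta>)))\<^sup>2"
  shows "real (nat \<lfloor>real n * \<theta>\<rfloor>) * real (n - nat \<lfloor>real n * \<theta>\<rfloor>) * \<bar>D\<bar> / real n - 2 * L * sqrt (real n)
     > C' * sqrt (real n) * sqrt K"
proof -
  define k where "k = nat \<lfloor>real n * \<theta>\<rfloor>"
  have k1: "real k \<ge> real n * \<theta> - 1" "real k \<le> real n * \<theta>"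
    unfolding k_def using th by (auto simp: of_nat_nat)
  then have k2: "real k \<ge> real n * \<theta> / 2" using nth by linarith
  have kn: "k \<le> n"
  proof -
    have "real n * \<theta> \<le> real n" using th by (intro mult_left_le) auto
    then have "real k \<le> real n" using k1 by linarith
    then show ?thesis by simp
  qed
  have nk: "real (n - k) \<ge> real n * (1 - \<theta>)" using kn k1 by (simp add: of_nat_diff algebra_simps)
  have pos1: "real n * (1 - \<theta>) \<ge> 0" "real n * \<theta> / 2 \<ge> 0" using th by auto
  have "real k * real (n - k) \<ge> (real n * \<theta> / 2) * (real n * (1 - \<theta>))"
    using k2 nk pos1 by (intro mult_mono) auto
  then have kk: "real k * real (n - k) / real n \<ge> \<theta> * (1 - \<theta>) / 2 * real n"
    using n by (simp add: field_simps power2_eq_square)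
  have tpos: "\<theta> * (1 - \<theta>) > 0" using th by simp
  have sqR: "sqrt (real n * D\<^sup>2) > A * 2 / (\<theta> * (1 - \<theta>))"
  proof -
    have "A * 2 / (\<theta> * (1 - \<theta>)) \<ge> 0" using A tpos by simp
    then have "A * 2 / (\<theta> * (1 - \<theta>)) = sqrt ((A * 2 / (\<theta> * (1 - \<theta>)))\<^sup>2)" by (simp only: real_sqrt_abs abs_of_nonneg)
    also have "\<dots> < sqrt (real n * D\<^sup>2)" using R by (simp only: real_sqrt_less_iff)
    finally show ?thesis .
  qed
  have sn: "sqrt (real n) > 0" using n by simp
  have nD: "real n * \<bar>D\<bar> = sqrt (real n) * sqrt (real n * D\<^sup>2)"
    by (simp add: real_sqrt_mult)
  have "real k * real (n - k) * \<bar>D\<bar> / real n = (real k * real (n - k) / real n) * \<bar>D\<bar>" by simp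
  also have "\<dots> \<ge> (\<theta> * (1 - \<theta>) / 2 * real n) * \<bar>D\<bar>" using kk by (intro mult_right_mono) auto
  finally have "real k * real (n - k) * \<bar>D\<bar> / real n \<ge> \<theta> * (1 - \<theta>) / 2 * sqrt (real n) * sqrt (real n * D\<^sup>2)"
    using nD by (simp add: mult.assoc)
  moreover have "\<theta> * (1 - \<theta>) / 2 * sqrt (real n) * sqrt (real n * D\<^sup>2) > \<theta> * (1 - \<theta>) / 2 * sqrt (real n) * (A * 2 / (\<theta> * (1 - \<theta>)))"
    using sqR tpos sn by (intro mult_strict_left_mono) auto
  moreover have "\<theta> * (1 - \<theta>) / 2 * sqrt (real n) * (A * 2 / (\<theta> * (1 - \<theta>))) = sqrt (real n) * A"
  proof -
    have gen: "t \<noteq> 0 \<Longrightarrow> t / 2 * s * (A * 2 / t) = s * A" for t s :: real by (simp add: field_simps)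
    have "\<theta> * (1 - \<theta>) \<noteq> 0" using tpos by linarith
    from gen[OF this, of "sqrt (real n)"] show ?thesis .
  qed
  ultimately have "real k * real (n - k) * \<bar>D\<bar> / real n > sqrt (real n) * A" by linarith
  then show ?thesis unfolding k_def[symmetric] A by (simp add: algebra_simps)
qed

theorem theorem3p2:
  fixes M :: "'a measure" and Y :: "int \<Rightarrow> 'a \<Rightarrow> real"
    and N :: "'b measure" and W :: "real \<Rightarrow> 'b \<Rightarrow> real"
    and \<mu> \<theta> \<sigma> :: real and \<Delta> :: "nat \<Rightarrow> real" and q :: "nat \<Rightarrow> nat"
  assumes "prob_space M"
    and "fourth_order_stationary M Y"
    and "\<forall>k. (\<integral>\<omega>. Y k \<omega> \<partial>M) = 0"
    and "\<sigma> > 0" and "std_BM_01 N W"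
    and "conv_dist_D M (partial_sum_proc Y) N (\<lambda>\<omega> t. \<sigma> * W t \<omega>)"
    and "(\<lambda>j. \<bar>autocov M Y j\<bar>) summable_on UNIV"
    and "\<exists>B. \<forall>h. (\<lambda>(r, s). \<bar>cum4 M Y h r s\<bar>) summable_on UNIV
                \<and> (\<Sum>\<^sub>\<infinity>(r, s). \<bar>cum4 M Y h r s\<bar>) \<le> B"
    and "0 < \<theta>" and "\<theta> < 1"
    and "filterlim (\<lambda>n. real n * (\<Delta> n)\<^sup>2) at_top sequentially"
    and "bounded_in_prob M (\<lambda>n \<omega>. (\<Delta> n)\<^sup>2 *
           \<bar>real (khat (cp_sample \<mu> (\<Delta> n) (nat \<lfloor>real n * \<theta>\<rfloor>) Y \<omega>) n)
            - real (nat \<lfloor>real n * \<theta>\<rfloor>)\<bar>)"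
    and "(\<lambda>n. real (q n) * (\<Delta> n)\<^sup>2) \<in> O(\<lambda>_. 1)"
    and "\<forall>n. q n > 0"
    and "filterlim q at_top sequentially"
    and "(\<lambda>n. real (q n) / real n) \<longlonglongrightarrow> 0"
  shows "\<forall>C. (\<lambda>n. measure M {\<omega>\<in>space M.
            Tstat (cp_sample \<mu> (\<Delta> n) (nat \<lfloor>real n * \<theta>\<rfloor>) Y \<omega>) n (q n) > C}) \<longlonglongrightarrow> 1"
proof
  fix C :: real
  note ps = assms(1)
  interpret prob_space M by (rule ps)
  interpret sm: statmodel M Y
    by unfold_locales (use assms in auto)
  define kk where "kk n = nat \<lfloor>real n * \<theta>\<rfloor>" for n :: nat
  define P where "P n = measure M {\<omega>\<in>space M. Tstat (cp_sample \<mu> (\<Delta> n) (kk n) Y \<omega>) n (q n) > C}" for n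
  have "P \<longlonglongrightarrow> 1"
  proof (rule order_tendstoI)
    fix b :: real assume "1 < b"
    show "\<forall>\<^sub>F n in sequentially. P n < b"
      using \<open>1 < b\<close> by (intro always_eventually allI) (auto simp: P_def intro: le_less_trans[OF prob_le_1])
  next
    fix a :: real assume "a < 1"
    define \<epsilon> where "\<epsilon> = 1 - a"
    have \<epsilon>: "\<epsilon> > 0" using \<open>a < 1\<close> by (simp add: \<epsilon>_def)
    obtain Bq where Bq: "Bq > 0" "\<forall>\<^sub>F n in sequentially. norm (real (q n) * (\<Delta> n)\<^sup>2) \<le> Bq * norm (1::real)"
      using assms(13) by (elim landau_o.bigE) auto
    define G where "G = sm.G"
    have G0: "G \<ge> 0" unfolding G_def by (rule sm.G_nonneg)
    define BU where "BU = 6 * (3 * G + 2 * Bq)"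
    have BU0: "BU > 0" using G0 Bq by (simp add: BU_def)
    define K where "K = 4 * BU / \<epsilon> + 1"
    have "4 * BU / \<epsilon> > 0" using BU0 \<epsilon> by simp
    then have K0: "K > 0" by (simp add: K_def)
    have BUK: "BU / K < \<epsilon> / 4"
    proof -
      have "4 * BU < \<epsilon> * K" using \<epsilon> by (simp add: K_def field_simps)
      then show ?thesis using K0 \<epsilon> by (simp add: field_simps)
    qed
    define L where "L = sqrt (4 * (G + 1) / \<epsilon>)"
    have L0: "L > 0" using G0 \<epsilon> by (simp add: L_def)
    have L2: "L\<^sup>2 = 4 * (G + 1) / \<epsilon>" using G0 \<epsilon> by (simp add: L_def)
    have GL: "G / L\<^sup>2 < \<epsilon> / 4"
      using G0 \<epsilon> unfolding L2 by (simp add: field_simps)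
    define C' where "C' = max C 1"
    define A where "A = 2 * L + C' * sqrt K"
    have A0: "A \<ge> 0" using L0 K0 by (simp add: A_def C'_def)
    define R where "R = (A * 2 / (\<theta> * (1 - \<theta>)))\<^sup>2"
    have ev1: "\<forall>\<^sub>F n in sequentially. real n * \<theta> \<ge> 2"
    proof -
      have "\<forall>\<^sub>F n in sequentially. real n \<ge> 2 / \<theta>"
        using filterlim_real_sequentially by (simp add: filterlim_at_top)
      then show ?thesis
        by eventually_elim (use assms(9) in \<open>simp add: field_simps\<close>)
    qed
    have ev2: "\<forall>\<^sub>F n in sequentially. real (q n) / real n < 1"
      using assms(16) by (rule order_tendstoD) simp
    have ev4: "\<forall>\<^sub>F n in sequentially. real n * (\<Delta> n)\<^sup>2 > R"
      using assms(11) by (simp add: filterlim_at_top_dense)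
    show "\<forall>\<^sub>F n in sequentially. a < P n"
      using ev1 ev2 Bq(2) ev4
    proof eventually_elim
      case (elim n)
      note nth = elim(1) and qn = elim(2) and qD = elim(3) and nD = elim(4)
      define k where "k = kk n"
      define D where "D = \<Delta> n"
      define qq where "qq = q n"
      have n0: "n > 0" using nth assms(9) by (cases n) auto
      have k1: "real k \<ge> real n * \<theta> - 1" "real k \<le> real n * \<theta>"
        unfolding k_def kk_def using assms(9) by (auto simp: of_nat_nat)
      have kpos: "1 \<le> k" using k1 nth by linarith
      have kn: "k \<le> n"
      proof -
        have "real n * \<theta> \<le> real n" using assms(10) by (intro mult_left_le) auto
        then show ?thesis using k1 by linarith
      qed
      have qq1: "qq \<ge> 1" using assms(14) by (simp add: qq_def Suc_le_eq)
      have qqn: "real qq \<le> real n" using qn n0 by (simp add: qq_def field_simps)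
      have qD': "real qq * D\<^sup>2 \<le> Bq" using qD by (simp add: qq_def D_def)
      have EU: "(\<integral>\<omega>. Ufun Y n qq D \<omega> \<partial>M) \<le> BU"
      proof -
        have r1: "(real n + real qq) / real n \<le> 2" using qqn n0 by (simp add: field_simps)
        have r2: "(real qq + 1) / real n \<le> 2" using qqn n0 by (simp add: field_simps)
        have r3: "(real qq + 1) * D\<^sup>2 \<le> 2 * Bq"
        proof -
          have "(real qq + 1) * D\<^sup>2 \<le> (2 * real qq) * D\<^sup>2" using qq1 by (intro mult_right_mono) auto
          then show ?thesis using qD' by linarith
        qed
        have r2': "(real qq + 1) * G / real n \<le> 2 * G"
          using r2 G0 by (metis mult.commute times_divide_eq_right mult_right_mono)
        have y: "G + (real qq + 1) * G / real n + (real qq + 1) * D\<^sup>2 \<le> 3 * G + 2 * Bq"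
          using r2' r3 by linarith
        have y0: "0 \<le> G + (real qq + 1) * G / real n + (real qq + 1) * D\<^sup>2" using G0 by simp
        have "(\<integral>\<omega>. Ufun Y n qq D \<omega> \<partial>M) \<le> 3 * ((real n + real qq) / real n) * (G + (real qq + 1) * G / real n + (real qq + 1) * D\<^sup>2)"
          using sm.Ufun_E[OF n0, of qq D] by (simp add: G_def)
        also have "\<dots> \<le> 3 * 2 * (3 * G + 2 * Bq)"
          using r1 y y0 by (intro mult_mono) auto
        finally show ?thesis by (simp add: BU_def)
      qed
      define E1 where "E1 = {\<omega>\<in>space M. Ufun Y n qq D \<omega> \<ge> K}"
      define E2 where "E2 = {\<omega>\<in>space M. \<bar>\<Sum>i\<in>{1..k}. Y (int i) \<omega>\<bar> > L * sqrt (real n)}"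
      define E3 where "E3 = {\<omega>\<in>space M. \<bar>\<Sum>i\<in>{1..n}. Y (int i) \<omega>\<bar> > L * sqrt (real n)}"
      have E1m: "E1 \<in> sets M" unfolding E1_def using sm.Ufun_int[of n qq D] by measurable
      have E2m: "E2 \<in> sets M" unfolding E2_def using sm.Ymeas by measurable
      have E3m: "E3 \<in> sets M" unfolding E3_def using sm.Ymeas by measurable
      have mE1: "measure M E1 < \<epsilon> / 4"
      proof -
        have "measure M E1 \<le> (\<integral>\<omega>. Ufun Y n qq D \<omega> \<partial>M) / K"
          unfolding E1_def
          by (rule integral_Markov_inequality_measure[where A="space M"])
             (use sm.Ufun_int sm.Ufun_nonneg K0 in auto)
        also have "\<dots> \<le> BU / K" using EU K0 by (intro divide_right_mono) auto
        finally show ?thesis using BUK by linarith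
      qed
      have Ln: "(L * sqrt (real n))\<^sup>2 = L\<^sup>2 * real n" by (simp add: power_mult_distrib)
      have mE2: "measure M E2 < \<epsilon> / 4"
      proof -
        have "measure M E2 \<le> real (card {1..k}) * sm.G / (L * sqrt (real n))\<^sup>2"
          unfolding E2_def by (rule sm.cheb_sum) (use L0 n0 in auto)
        also have "\<dots> = real k * G / (L\<^sup>2 * real n)" by (simp add: Ln G_def)
        also have "\<dots> \<le> real n * G / (L\<^sup>2 * real n)"
          using kn G0 L0 n0 by (intro divide_right_mono mult_right_mono) auto
        also have "\<dots> = G / L\<^sup>2" using n0 by simp
        finally show ?thesis using GL by linarith
      qed
      have mE3: "measure M E3 < \<epsilon> / 4"
      proof -
        have "measure M E3 \<le> real (card {1..n}) * sm.G / (L * sqrt (real n))\<^sup>2"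
          unfolding E3_def by (rule sm.cheb_sum) (use L0 n0 in auto)
        also have "\<dots> = G / L\<^sup>2" using n0 by (simp add: Ln G_def)
        finally show ?thesis using GL by linarith
      qed
      have big: "real k * real (n - k) * \<bar>D\<bar> / real n - 2 * (L * sqrt (real n)) > C' * sqrt (real n) * sqrt K"
        using big_lemma[OF assms(9,10) n0 nth A_def A0, of D] nD
        by (simp add: R_def D_def k_def kk_def mult.assoc)
      define T where "T = {\<omega>\<in>space M. Tstat (cp_sample \<mu> (\<Delta> n) (kk n) Y \<omega>) n (q n) > C}"
      have Tm: "T \<in> sets M"
      proof -
        have "(\<lambda>\<omega>. Tstat (cp_sample \<mu> (\<Delta> n) (kk n) Y \<omega>) n (q n)) \<in> borel_measurable M"
          by (rule Tstat_meas) (rule sm.Ymeas)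
        then show ?thesis unfolding T_def by measurable
      qed
      have sub: "space M - (E1 \<union> E2 \<union> E3) \<subseteq> T"
      proof
        fix \<omega> assume w: "\<omega> \<in> space M - (E1 \<union> E2 \<union> E3)"
        have U: "Ufun Y n qq D \<omega> < K" using w by (auto simp: E1_def)
        have s: "s2 (cp_sample \<mu> D k Y \<omega>) n qq < K"
          using s2_le_U[OF n0 kn, of \<mu> D Y \<omega> qq] U by linarith
        have S2: "\<bar>\<Sum>i\<in>{1..k}. Y (int i) \<omega>\<bar> \<le> L * sqrt (real n)" using w by (auto simp: E2_def)
        have S3: "\<bar>\<Sum>i\<in>{1..n}. Y (int i) \<omega>\<bar> \<le> L * sqrt (real n)" using w by (auto simp: E3_def)
        have "Tstat (cp_sample \<mu> D k Y \<omega>) n qq > C"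
          by (rule good_imp[OF n0 kpos kn s S2 S3 big]) (auto simp: C'_def)
        then show "\<omega> \<in> T" using w by (simp add: T_def D_def k_def qq_def)
      qed
      have "measure M (E1 \<union> E2 \<union> E3) \<le> measure M E1 + measure M E2 + measure M E3"
        using measure_Un_le[of "E1 \<union> E2" M E3] measure_Un_le[of E1 M E2] E1m E2m E3m by auto
      then have "measure M (E1 \<union> E2 \<union> E3) < 3 * \<epsilon> / 4" using mE1 mE2 mE3 by linarith
      moreover have "measure M (space M - (E1 \<union> E2 \<union> E3)) = 1 - measure M (E1 \<union> E2 \<union> E3)"
        using E1m E2m E3m by (intro prob_compl) auto
      moreover have "measure M (space M - (E1 \<union> E2 \<union> E3)) \<le> measure M T"
        using sub Tm by (intro finite_measure_mono)
      ultimately have "measure M T > 1 - \<epsilon>" using \<epsilon> by linarith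
      then show "a < P n" by (simp add: P_def T_def \<epsilon>_def)
    qed
  qed
  moreover have "P = (\<lambda>n. measure M {\<omega>\<in>space M.
            Tstat (cp_sample \<mu> (\<Delta> n) (nat \<lfloor>real n * \<theta>\<rfloor>) Y \<omega>) n (q n) > C})"
    by (rule ext) (simp add: P_def kk_def)
  ultimately show "(\<lambda>n. measure M {\<omega>\<in>space M.
            Tstat (cp_sample \<mu> (\<Delta> n) (nat \<lfloor>real n * \<theta>\<rfloor>) Y \<omega>) n (q n) > C}) \<longlonglongrightarrow> 1"
    by simp
qed


end
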